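(* Let $\pi\in\mathfrak{B}_n$ and regard $\Omega'_B(\pi;x)$ as a polynomial in $x$. If $\pi(1)>0$ then $\Omega'_B(\pi;-x-1/2)=(-1)^n\,\Omega'_B(\pi;x-1/2)$. If $\pi(1)<0$ then $\Omega'_B(\pi;-x)=(-1)^n\,\Omega'_B(\pi;x)$.
   Context: $\mathfrak{B}_n$ is the group of signed permutations (bijections $\pi$ of $\{-n,\dots,n\}$ with $\pi(-i)=-\pi(i)$), written as words $(\pi(1),\dots,\pi(n))$, with $\pi(0)=0$. For an integer $k\ge0$ let $Z_k$ be the totally ordered set $0<\bar1<1<\bar2<2<\dots<\bar k<k$, with $0$ and unbarred $j$ "plus-type" and barred $\bar j$ "minus-type". $\Omega'_B(\pi;k)$ is the number of sequences $(a_1,\dots,a_n)\in Z_k^n$ such that, with $a_0=0$, $a_0\le a_1\le\dots\le a_n$ and for every $s\in\{0,\dots,n-1\}$: if $\pi(s)<\pi(s+1)$ then $a_s<a_{s+1}$ or ($a_s=a_{s+1}$ is plus-type); if $\pi(s)>\pi(s+1)$ then $a_s<a_{s+1}$ or ($a_s=a_{s+1}$ is minus-type). As a function of $k\ge0$ this agrees with a unique polynomial in $k$ with rational coefficients, denoted $\Omega'_B(\pi;x)$. *)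

theory Defs
  imports "HOL-Computational_Algebra.Polynomial"
begin

definition signed_perm :: "nat \<Rightarrow> (int \<Rightarrow> int) \<Rightarrow> bool" where
  "signed_perm n w \<longleftrightarrow>
     bij_betw w {-int n..int n} {-int n..int n} \<and>
     (\<forall>i\<in>{-int n..int n}. w (-i) = - w i)"

text \<open>Encoding of the totally ordered set Z_k = 0 < bar1 < 1 < bar2 < 2 < ... < bark < k
  as the natural numbers {0..2k}, order preserved: 0 is 0, bar j is 2j-1, j is 2j.
  Plus-type elements (0 and unbarred j) are exactly the even codes,
  minus-type elements (bar j) exactly the odd codes.\<close>
definition Zk :: "nat \<Rightarrow> nat set" where
  "Zk k = {0..2*k}"

definition plus_type :: "nat \<Rightarrow> bool" where
  "plus_type z \<longleftrightarrow> even z"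

definition minus_type :: "nat \<Rightarrow> bool" where
  "minus_type z \<longleftrightarrow> odd z"

text \<open>Admissible sequences (a_1,...,a_n) in Z_k^n, represented as functions with a 0 = 0
  and a i = 0 for i > n (so that they are uniquely determined by (a_1..a_n)).\<close>
definition OmegaB_seqs :: "nat \<Rightarrow> (int \<Rightarrow> int) \<Rightarrow> nat \<Rightarrow> (nat \<Rightarrow> nat) set" where
  "OmegaB_seqs n w k = {a. a 0 = 0 \<and> (\<forall>i>n. a i = 0) \<and>
      (\<forall>i\<in>{1..n}. a i \<in> Zk k) \<and>
      (\<forall>s<n. a s \<le> a (Suc s) \<and>
         (w (int s) < w (int (Suc s)) \<longrightarrow>
            a s < a (Suc s) \<or> (a s = a (Suc s) \<and> plus_type (a s))) \<and>
         (w (int s) > w (int (Suc s)) \<longrightarrow>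
            a s < a (Suc s) \<or> (a s = a (Suc s) \<and> minus_type (a s))))}"

definition OmegaB :: "nat \<Rightarrow> (int \<Rightarrow> int) \<Rightarrow> nat \<Rightarrow> nat" where
  "OmegaB n w k = card (OmegaB_seqs n w k)"

definition OmegaB_poly :: "nat \<Rightarrow> (int \<Rightarrow> int) \<Rightarrow> rat poly" where
  "OmegaB_poly n w = (THE p. \<forall>k::nat. poly p (of_nat k) = of_nat (OmegaB n w k))"

end

theory Submission
  imports Defs
begin


lemma poly_zero_on_nats:
  fixes p :: "rat poly"
  assumes "\<forall>n::nat. poly p (of_nat n) = 0"
  shows "p = 0"
proof (rule ccontr)
  assume "p \<noteq> 0"
  hence "finite {x. poly p x = 0}" by (rule poly_roots_finite)
  moreover have "range (of_nat :: nat \<Rightarrow> rat) \<subseteq> {x. poly p x = 0}" using assms by auto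
  ultimately have "finite (range (of_nat :: nat \<Rightarrow> rat))" by (rule finite_subset[rotated])
  moreover have "inj (of_nat :: nat \<Rightarrow> rat)" by (simp add: inj_on_def)
  ultimately have "finite (UNIV :: nat set)" using finite_imageD by blast
  thus False by simp
qed

lemma diff_uniq:
  fixes f g :: "rat \<Rightarrow> rat"
  assumes d: "\<And>x. f (x+1) - f x = g (x+1) - g x" and z: "f 0 = g 0"
    and pf: "\<And>x. f x = poly p x" and pg: "\<And>x. g x = poly q x"
  shows "f x = g x"
proof -
  define h where "h = p - q - [:poly (p - q) 0:]"
  have per: "poly (p-q) (y+1) = poly (p-q) y" for y
    using d[of y] by (simp add: pf pg algebra_simps)
  have "\<forall>n::nat. poly h (of_nat n) = 0"
  proof
    fix n :: nat show "poly h (of_nat n) = 0"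
    proof (induction n)
      case 0 then show ?case by (simp add: h_def)
    next
      case (Suc n)
      have "poly (p-q) (of_nat (Suc n)) = poly (p-q) (of_nat n)"
        using per[of "of_nat n"] by (simp add: add.commute)
      with Suc show ?case by (simp add: h_def)
    qed
  qed
  hence "h = 0" by (rule poly_zero_on_nats)
  hence "poly h x = 0" by simp
  hence "poly (p - q) x = poly (p-q) 0" unfolding h_def by simp
  thus ?thesis using z by (simp add: pf pg)
qed

lemma antidiff_ex:
  fixes p :: "rat poly"
  shows "degree p \<le> N \<Longrightarrow> \<exists>q. \<forall>x. poly q (x+1) - poly q x = poly p x"
proof (induction N arbitrary: p)
  case 0
  then obtain c where "p = [:c:]" by (metis degree_eq_zeroE le_zero_eq)
  then show ?case by (intro exI[of _ "[:0, c:]"]) (simp add: algebra_simps)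
next
  case (Suc N)
  define K where "K = Suc (Suc N)"
  define c where "c = coeff p (Suc N)"
  define D where "D = smult (c / of_nat K) ([:1,1:]^K - monom 1 K)"
  have degpow: "degree ([:1,1::rat:]^K) \<le> K"
    using degree_power_le[of "[:1,1::rat:]" K] by simp
  have "degree (p - D) \<le> N"
  proof (rule degree_le, intro allI impI)
    fix i assume "N < i"
    then consider "i = Suc N" | "i = K" | "i > K" unfolding K_def by linarith
    then show "coeff (p - D) i = 0"
    proof cases
      case 1
      have "coeff ([:1,1::rat:]^K) i = of_nat (K choose i)"
        using coeff_linear_poly_power[of i K "1::rat" 1] 1 K_def by simp
      also have "\<dots> = of_nat K" using 1 K_def by simp
      finally show ?thesis using 1 by (simp add: D_def c_def K_def coeff_monom)
    next
      case 2
      have "coeff ([:1,1::rat:]^K) i = 1"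
        using coeff_linear_poly_power[of i K "1::rat" 1] 2 by simp
      moreover have "coeff p i = 0" using Suc.prems 2 K_def by (intro coeff_eq_0) simp
      ultimately show ?thesis using 2 by (simp add: D_def coeff_monom)
    next
      case 3
      have "coeff ([:1,1::rat:]^K) i = 0" using degpow 3 by (intro coeff_eq_0) simp
      moreover have "coeff p i = 0" using Suc.prems 3 K_def by (intro coeff_eq_0) simp
      ultimately show ?thesis using 3 by (simp add: D_def coeff_monom)
    qed
  qed
  then obtain q where q: "\<forall>x. poly q (x+1) - poly q x = poly (p - D) x" using Suc.IH by blast
  show ?case
  proof (intro exI[of _ "q + monom (c / of_nat K) K"] allI)
    fix x :: rat
    have "poly D x = c / of_nat K * ((x+1)^K - x^K)"
      by (simp add: D_def poly_monom add.commute)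
    then show "poly (q + monom (c / of_nat K) K) (x + 1) - poly (q + monom (c / of_nat K) K) x = poly p x"
      using q[rule_format, of x] by (simp add: poly_monom algebra_simps)
  qed
qed

definition SigA :: "rat poly \<Rightarrow> rat poly" where
  "SigA p = (SOME q. (\<forall>x. poly q (x+1) - poly q x = poly p x) \<and> poly q 0 = 0)"

lemma SigA: "poly (SigA p) (x+1) - poly (SigA p) x = poly p x" "poly (SigA p) 0 = 0"
proof -
  obtain q where q: "\<forall>x. poly q (x+1) - poly q x = poly p x"
    using antidiff_ex[of p "degree p"] by auto
  define q' where "q' = q - [:poly q 0:]"
  have "(\<forall>x. poly q' (x+1) - poly q' x = poly p x) \<and> poly q' 0 = 0"
    using q by (simp add: q'_def)
  hence "(\<forall>x. poly (SigA p) (x+1) - poly (SigA p) x = poly p x) \<and> poly (SigA p) 0 = 0"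
    unfolding SigA_def by (rule someI)
  thus "poly (SigA p) (x+1) - poly (SigA p) x = poly p x" "poly (SigA p) 0 = 0" by auto
qed

definition SigD :: "rat poly \<Rightarrow> rat poly" where
  "SigD p = SigA (pcompose p [:1,1:])"

lemma SigD: "poly (SigD p) x - poly (SigD p) (x - 1) = poly p x" "poly (SigD p) 0 = 0"
proof -
  show "poly (SigD p) x - poly (SigD p) (x - 1) = poly p x"
    using SigA(1)[of "pcompose p [:1,1:]" "x - 1"] by (simp add: SigD_def poly_pcompose)
  show "poly (SigD p) 0 = 0" by (simp add: SigD_def SigA)
qed



fun G :: "(nat \<Rightarrow> bool) \<Rightarrow> nat \<Rightarrow> nat \<Rightarrow> nat" where
  "G t 0 c = (if c = 0 then 1 else 0)"
| "G t (Suc s) c = (\<Sum>d<c. G t s d) + (if even c = t s then G t s c else 0)"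

definition H :: "(nat \<Rightarrow> bool) \<Rightarrow> nat \<Rightarrow> nat \<Rightarrow> nat" where
  "H t s m = (\<Sum>c\<le>m. G t s c)"

lemma H_0: "H t s 0 = G t s 0" by (simp add: H_def)
lemma H_Suc: "H t s (Suc m) = H t s m + G t s (Suc m)" by (simp add: H_def)
lemma G_Suc_Suc: "G t (Suc s) (Suc m) = H t s m + (if even (Suc m) = t s then G t s (Suc m) else 0)"
  by (simp add: H_def lessThan_Suc_atMost)

fun PP :: "(nat \<Rightarrow> bool) \<Rightarrow> nat \<Rightarrow> rat poly \<times> rat poly" where
  "PP t 0 = (1, 1)"
| "PP t (Suc s) = (let E = fst (PP t s); Q = snd (PP t s) in
     if t s then (smult 2 (SigA E) + E, smult 2 (SigA E))
     else (smult 2 (SigD Q), smult 2 (SigD Q) - Q))"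

lemma H0_val: "H t 0 m = 1"
  by (induction m) (simp_all add: H_0 H_Suc)

lemma PP_vals:
  "poly (fst (PP t s)) (of_nat j) = of_nat (H t s (2*j)) \<and>
   (j \<ge> 1 \<longrightarrow> poly (snd (PP t s)) (of_nat j) = of_nat (H t s (2*j - 1)))"
proof (induction s arbitrary: j)
  case 0
  then show ?case by (simp add: H0_val)
next
  case (Suc s)
  define E where "E = fst (PP t s)"
  define Q where "Q = snd (PP t s)"
  have IE: "poly E (of_nat i) = of_nat (H t s (2*i))" for i using Suc.IH[of i] by (simp add: E_def)
  have IO: "poly Q (of_nat (Suc i)) = of_nat (H t s (2*i+1))" for i
    using Suc.IH[of "Suc i"] by (simp add: Q_def)
  show ?case
  proof (cases "t s")
    case True
    have PPs: "PP t (Suc s) = (smult 2 (SigA E) + E, smult 2 (SigA E))"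
      using True by (simp add: E_def Q_def Let_def)
    have h0: "H t (Suc s) 0 = H t s 0" using True by (simp add: H_0)
    have h1: "H t (Suc s) (2*i+1) = H t (Suc s) (2*i) + H t s (2*i)" for i
      using True G_Suc_Suc[of t s "2*i"] H_Suc[of t "Suc s" "2*i"] by (simp del: G.simps)
    have h2: "H t (Suc s) (2*i+2) = H t (Suc s) (2*i+1) + H t s (2*i+2)" for i
      using True G_Suc_Suc[of t s "2*i+1"] H_Suc[of t s "2*i+1"] H_Suc[of t "Suc s" "2*i+1"]
      by (simp del: G.simps)
    have sA: "poly (SigA E) (of_nat (Suc i)) = poly (SigA E) (of_nat i) + poly E (of_nat i)" for i
      using SigA(1)[of E "of_nat i"] by (simp add: algebra_simps)
    have ev: "poly (smult 2 (SigA E) + E) (of_nat i) = of_nat (H t (Suc s) (2*i))" for i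
    proof (induction i)
      case 0 then show ?case using IE[of 0] h0 by (simp add: SigA)
    next
      case (Suc i)
      have "H t (Suc s) (2 * Suc i) = H t (Suc s) (2*i) + H t s (2*i) + H t s (2*Suc i)"
        using h1[of i] h2[of i] by simp
      then show ?case using Suc sA[of i] IE[of i] IE[of "Suc i"] by (simp add: algebra_simps)
    qed
    have od: "poly (smult 2 (SigA E)) (of_nat (Suc i)) = of_nat (H t (Suc s) (2*Suc i - 1))" for i
      using ev[of i] h1[of i] sA[of i] IE[of i] by (simp add: algebra_simps)
    show ?thesis
    proof (intro conjI impI)
      show "poly (fst (PP t (Suc s))) (of_nat j) = of_nat (H t (Suc s) (2 * j))" using ev PPs by simp
      assume "1 \<le> j"
      then obtain i where "j = Suc i" by (cases j) auto
      then show "poly (snd (PP t (Suc s))) (of_nat j) = of_nat (H t (Suc s) (2 * j - 1))"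
        using od PPs by simp
    qed
  next
    case False
    have PPs: "PP t (Suc s) = (smult 2 (SigD Q), smult 2 (SigD Q) - Q)"
      using False by (simp add: E_def Q_def Let_def)
    have h0: "H t (Suc s) 0 = 0" using False by (simp add: H_0)
    have h1: "H t (Suc s) (2*i+1) = H t (Suc s) (2*i) + H t s (2*i+1)" for i
      using False G_Suc_Suc[of t s "2*i"] H_Suc[of t s "2*i"] H_Suc[of t "Suc s" "2*i"] by (simp del: G.simps)
    have h2: "H t (Suc s) (2*i+2) = H t (Suc s) (2*i+1) + H t s (2*i+1)" for i
      using False G_Suc_Suc[of t s "2*i+1"] H_Suc[of t "Suc s" "2*i+1"]
      by (simp del: G.simps)
    have sD: "poly (SigD Q) (of_nat (Suc i)) = poly (SigD Q) (of_nat i) + poly Q (of_nat (Suc i))" for i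
      using SigD(1)[of Q "of_nat (Suc i)"] by (simp add: algebra_simps)
    have ev: "poly (smult 2 (SigD Q)) (of_nat i) = of_nat (H t (Suc s) (2*i))" for i
    proof (induction i)
      case 0 then show ?case using h0 by (simp add: SigD)
    next
      case (Suc i)
      have "H t (Suc s) (2 * Suc i) = H t (Suc s) (2*i) + H t s (2*i+1) + H t s (2*i+1)"
        using h1[of i] h2[of i] by simp
      then show ?case using Suc sD[of i] IO[of i] by (simp add: algebra_simps)
    qed
    have od: "poly (smult 2 (SigD Q) - Q) (of_nat (Suc i)) = of_nat (H t (Suc s) (2*Suc i - 1))" for i
    proof -
      have "H t (Suc s) (2 * Suc i) = H t (Suc s) (2*i+1) + H t s (2*i+1)"
        using h2[of i] by simp
      then show ?thesis using ev[of "Suc i"] IO[of i] by (simp add: algebra_simps)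
    qed
    show ?thesis
    proof (intro conjI impI)
      show "poly (fst (PP t (Suc s))) (of_nat j) = of_nat (H t (Suc s) (2 * j))" using ev PPs by simp
      assume "1 \<le> j"
      then obtain i where "j = Suc i" by (cases j) auto
      then show "poly (snd (PP t (Suc s))) (of_nat j) = of_nat (H t (Suc s) (2 * j - 1))"
        using od PPs by simp
    qed
  qed
qed



lemma stepAA:
  fixes E Q :: "rat poly" and e :: rat
  assumes hE: "\<And>x. poly E (-1-x) = e * poly E x"
  shows "poly (smult 2 (SigA E) + E) (-1-x) = -e * poly (smult 2 (SigA E) + E) x"
    "poly (smult 2 (SigA E)) (-x) = -e * poly (smult 2 (SigA E)) x"
    "poly (smult 2 (SigA E)) 0 = 0"
proof -
  define S where "S = SigA E"
  have sd: "poly S (y+1) = poly S y + poly E y" for y using SigA(1)[of E y] by (simp add: S_def)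
  have Sneg: "poly S (-y) = -e * poly S y" for y
  proof (rule diff_uniq[where f="\<lambda>x. poly S (-x)" and g="\<lambda>x. -e * poly S x"
        and p="pcompose S [:0,-1:]" and q="smult (-e) S"])
    fix x :: rat
    have m: "(-(x+1)::rat) = -1-x" by simp
    have "poly S (-x) = poly S (-(x+1)) + poly E (-1-x)" using sd[of "-(x+1)"] unfolding m by simp
    then show "poly S (- (x + 1)) - poly S (- x) = - e * poly S (x + 1) - - e * poly S x"
      using hE[of x] sd[of x] by (simp add: algebra_simps)
  qed (auto simp: poly_pcompose S_def SigA)
  show "poly (smult 2 (SigA E) + E) (-1-x) = -e * poly (smult 2 (SigA E) + E) x"
    using Sneg[of "x+1"] sd[of x] hE[of x] by (simp add: S_def[symmetric] algebra_simps)
  show "poly (smult 2 (SigA E)) (-x) = -e * poly (smult 2 (SigA E)) x"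
    using Sneg[of x] by (simp add: S_def[symmetric])
  show "poly (smult 2 (SigA E)) 0 = 0" by (simp add: SigA)
qed

lemma stepAD:
  fixes E Q :: "rat poly" and e :: rat
  assumes hQ: "\<And>x. poly Q (-x) = e * poly Q x" and q0: "poly Q 0 = 0"
  shows "poly (smult 2 (SigD Q)) (-1-x) = -e * poly (smult 2 (SigD Q)) x"
    "poly (smult 2 (SigD Q) - Q) (-x) = -e * poly (smult 2 (SigD Q) - Q) x"
    "poly (smult 2 (SigD Q) - Q) 0 = 0"
proof -
  define T where "T = SigD Q"
  have td: "poly T (y-1) = poly T y - poly Q y" for y using SigD(1)[of Q y] by (simp add: T_def)
  have T0: "poly T 0 = 0" by (simp add: T_def SigD)
  have Tneg: "poly T (-1-y) = -e * poly T y" for y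
  proof (rule diff_uniq[where f="\<lambda>x. poly T (-1-x)" and g="\<lambda>x. -e * poly T x"
        and p="pcompose T [:-1,-1:]" and q="smult (-e) T"])
    fix x :: rat
    have a: "poly T (-1-(x+1)) = poly T (-1-x) - poly Q (-1-x)" using td[of "-1-x"] by simp
    have b: "poly T x = poly T (x+1) - poly Q (x+1)" using td[of "x+1"] by simp
    have c: "poly Q (-1-x) = e * poly Q (x+1)" using hQ[of "x+1"] by (simp add: algebra_simps)
    have b2: "e * poly T (x+1) - e * poly T x = e * poly Q (x+1)"
      using b by (simp add: right_diff_distrib[symmetric])
    show "poly T (-1-(x + 1)) - poly T (-1-x) = - e * poly T (x + 1) - - e * poly T x"
      using a b2 c by (simp add: algebra_simps)
  next
    show "poly T (-1-0) = - e * poly T 0" using td[of 0] q0 T0 by simp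
  qed (auto simp: poly_pcompose algebra_simps intro!: arg_cong[where f="poly T"])
  show "poly (smult 2 (SigD Q)) (-1-x) = -e * poly (smult 2 (SigD Q)) x"
    using Tneg[of x] by (simp add: T_def[symmetric])
  have m: "(-x-1::rat) = -1-x" by simp
  have "poly T (-x) = poly T (-1-x) + poly Q (-x)" using td[of "-x"] unfolding m by (simp add: algebra_simps)
  then show "poly (smult 2 (SigD Q) - Q) (-x) = -e * poly (smult 2 (SigD Q) - Q) x"
    using Tneg[of x] hQ[of x] by (simp add: T_def[symmetric] algebra_simps)
  show "poly (smult 2 (SigD Q) - Q) 0 = 0" using q0 by (simp add: SigD)
qed

lemma stepDA:
  fixes E Q :: "rat poly" and e :: rat
  assumes hE: "\<And>x. poly E (-x) = e * poly E x" and e0: "poly E 0 = 0"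
  shows "poly (smult 2 (SigA E) + E) (-x) = -e * poly (smult 2 (SigA E) + E) x"
    "poly (smult 2 (SigA E)) (1-x) = -e * poly (smult 2 (SigA E)) x"
    "poly (smult 2 (SigA E) + E) 0 = 0"
proof -
  define S where "S = SigA E"
  have sd: "poly S (y+1) = poly S y + poly E y" for y using SigA(1)[of E y] by (simp add: S_def)
  have S0: "poly S 0 = 0" by (simp add: S_def SigA)
  have Sneg: "poly S (1-y) = -e * poly S y" for y
  proof (rule diff_uniq[where f="\<lambda>x. poly S (1-x)" and g="\<lambda>x. -e * poly S x"
        and p="pcompose S [:1,-1:]" and q="smult (-e) S"])
    fix x :: rat
    have "poly S (1-x) = poly S (1-(x+1)) + poly E (-x)" using sd[of "-x"] by simp
    then show "poly S (1-(x + 1)) - poly S (1-x) = - e * poly S (x + 1) - - e * poly S x"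
      using hE[of x] sd[of x] by (simp add: algebra_simps)
  next
    show "poly S (1-0) = - e * poly S 0" using sd[of 0] S0 e0 by simp
  qed (auto simp: poly_pcompose algebra_simps)
  have "poly S (-x) = poly S (1-x) - poly E (-x)" using sd[of "-x"] by simp
  then show "poly (smult 2 (SigA E) + E) (-x) = -e * poly (smult 2 (SigA E) + E) x"
    using Sneg[of x] hE[of x] by (simp add: S_def[symmetric] algebra_simps)
  show "poly (smult 2 (SigA E)) (1-x) = -e * poly (smult 2 (SigA E)) x"
    using Sneg[of x] by (simp add: S_def[symmetric])
  show "poly (smult 2 (SigA E) + E) 0 = 0" using e0 by (simp add: SigA)
qed

lemma stepDD:
  fixes E Q :: "rat poly" and e :: rat
  assumes hQ: "\<And>x. poly Q (1-x) = e * poly Q x"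
  shows "poly (smult 2 (SigD Q)) (-x) = -e * poly (smult 2 (SigD Q)) x"
    "poly (smult 2 (SigD Q) - Q) (1-x) = -e * poly (smult 2 (SigD Q) - Q) x"
    "poly (smult 2 (SigD Q)) 0 = 0"
proof -
  define T where "T = SigD Q"
  have td: "poly T (y-1) = poly T y - poly Q y" for y using SigD(1)[of Q y] by (simp add: T_def)
  have T0: "poly T 0 = 0" by (simp add: T_def SigD)
  have Tneg: "poly T (-y) = -e * poly T y" for y
  proof (rule diff_uniq[where f="\<lambda>x. poly T (-x)" and g="\<lambda>x. -e * poly T x"
        and p="pcompose T [:0,-1:]" and q="smult (-e) T"])
    fix x :: rat
    have a: "poly T (-(x+1)) = poly T (-x) - poly Q (-x)" using td[of "-x"] by simp
    have b: "poly T x = poly T (x+1) - poly Q (x+1)" using td[of "x+1"] by simp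
    have c: "poly Q (-x) = e * poly Q (x+1)" using hQ[of "x+1"] by (simp add: algebra_simps)
    have b2: "e * poly T (x+1) - e * poly T x = e * poly Q (x+1)"
      using b by (simp add: right_diff_distrib[symmetric])
    show "poly T (-(x + 1)) - poly T (-x) = - e * poly T (x + 1) - - e * poly T x"
      using a b2 c by (simp add: algebra_simps)
  qed (auto simp: poly_pcompose T0)
  show "poly (smult 2 (SigD Q)) (-x) = -e * poly (smult 2 (SigD Q)) x"
    using Tneg[of x] by (simp add: T_def[symmetric])
  have "poly T (1-x) = poly T (-x) + poly Q (1-x)" using td[of "1-x"] by (simp add: algebra_simps)
  then show "poly (smult 2 (SigD Q) - Q) (1-x) = -e * poly (smult 2 (SigD Q) - Q) x"
    using Tneg[of x] hQ[of x] by (simp add: T_def[symmetric] algebra_simps)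
  show "poly (smult 2 (SigD Q)) 0 = 0" by (simp add: SigD)
qed



lemma SigA_1: "poly (SigA 1) x = x"
  by (rule diff_uniq[where f="poly (SigA 1)" and g="\<lambda>x. x" and q="[:0,1:]"])
     (auto simp: SigA SigA(1)[of 1, simplified])

lemma SigD_1: "poly (SigD 1) x = x"
proof (rule diff_uniq[where f="poly (SigD 1)" and g="\<lambda>x. x" and q="[:0,1:]"])
  fix y :: rat
  show "poly (SigD 1) (y + 1) - poly (SigD 1) y = y + 1 - y"
    using SigD(1)[of 1 "y+1"] by simp
qed (auto simp: SigD)

definition symA :: "rat poly \<times> rat poly \<Rightarrow> rat \<Rightarrow> bool" where
  "symA P e \<longleftrightarrow> (\<forall>x. poly (fst P) (-1-x) = e * poly (fst P) x) \<and>
     (\<forall>x. poly (snd P) (-x) = e * poly (snd P) x) \<and> poly (snd P) 0 = 0"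

definition symD :: "rat poly \<times> rat poly \<Rightarrow> rat \<Rightarrow> bool" where
  "symD P e \<longleftrightarrow> (\<forall>x. poly (fst P) (-x) = e * poly (fst P) x) \<and>
     (\<forall>x. poly (snd P) (1-x) = e * poly (snd P) x) \<and> poly (fst P) 0 = 0"

lemma PP_sym:
  "s \<ge> 1 \<Longrightarrow> (t 0 \<longrightarrow> symA (PP t s) ((-1)^s)) \<and> (\<not> t 0 \<longrightarrow> symD (PP t s) ((-1)^s))"
proof (induction s)
  case 0 then show ?case by simp
next
  case (Suc s)
  show ?case
  proof (cases "s = 0")
    case True
    have P1: "PP t (Suc 0) = (if t 0 then (smult 2 (SigA 1) + 1, smult 2 (SigA 1))
                              else (smult 2 (SigD 1), smult 2 (SigD 1) - 1))"
      by (simp add: Let_def)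
    have a1: "poly (SigA 1) y = y" for y by (rule SigA_1)
    have d1: "poly (SigD 1) y = y" for y by (rule SigD_1)
    show ?thesis unfolding True
    proof (intro conjI impI)
      assume "t 0"
      then show "symA (PP t (Suc 0)) ((-1)^Suc 0)" unfolding P1 symA_def
        by (simp add: a1)
    next
      assume "\<not> t 0"
      then show "symD (PP t (Suc 0)) ((-1)^Suc 0)" unfolding P1 symD_def
        by (simp add: d1)
    qed
  next
    case False
    then have IH: "(t 0 \<longrightarrow> symA (PP t s) ((-1)^s)) \<and> (\<not> t 0 \<longrightarrow> symD (PP t s) ((-1)^s))"
      using Suc.IH by simp
    define E where "E = fst (PP t s)"
    define Q where "Q = snd (PP t s)"
    have neg: "((-1::rat)^Suc s) = - ((-1)^s)" by simp
    show ?thesis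
    proof (cases "t s")
      case ts: True
      have PPs: "PP t (Suc s) = (smult 2 (SigA E) + E, smult 2 (SigA E))"
        using ts by (simp add: E_def Q_def Let_def)
      show ?thesis
      proof (intro conjI impI)
        assume "t 0"
        then have h: "symA (PP t s) ((-1)^s)" using IH by simp
        show "symA (PP t (Suc s)) ((-1)^Suc s)"
          
          proof -
            have hE: "poly E (-1-x) = (-1)^s * poly E x" for x using h unfolding symA_def E_def by blast
            show ?thesis unfolding PPs symA_def symD_def neg fst_conv snd_conv using stepAA[OF hE] by blast
          qed
      next
        assume "\<not> t 0"
        then have h: "symD (PP t s) ((-1)^s)" using IH by simp
        show "symD (PP t (Suc s)) ((-1)^Suc s)"
          
          proof -
            have hE: "poly E (-x) = (-1)^s * poly E x" for x using h unfolding symD_def E_def by blast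
            have e0: "poly E 0 = 0" using h by (simp add: symD_def E_def)
            show ?thesis unfolding PPs symA_def symD_def neg fst_conv snd_conv using stepDA[OF hE e0] by blast
          qed
      qed
    next
      case ts: False
      have PPs: "PP t (Suc s) = (smult 2 (SigD Q), smult 2 (SigD Q) - Q)"
        using ts by (simp add: E_def Q_def Let_def)
      show ?thesis
      proof (intro conjI impI)
        assume "t 0"
        then have h: "symA (PP t s) ((-1)^s)" using IH by simp
        show "symA (PP t (Suc s)) ((-1)^Suc s)"
          
          proof -
            have hQ: "poly Q (-x) = (-1)^s * poly Q x" for x using h unfolding symA_def Q_def by blast
            have q0: "poly Q 0 = 0" using h by (simp add: symA_def Q_def)
            show ?thesis unfolding PPs symA_def symD_def neg fst_conv snd_conv using stepAD[OF hQ q0] by blast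
          qed
      next
        assume "\<not> t 0"
        then have h: "symD (PP t s) ((-1)^s)" using IH by simp
        show "symD (PP t (Suc s)) ((-1)^Suc s)"
          
          proof -
            have hQ: "poly Q (1-x) = (-1)^s * poly Q x" for x using h unfolding symD_def Q_def by blast
            show ?thesis unfolding PPs symA_def symD_def neg fst_conv snd_conv using stepDD[OF hQ] by blast
          qed
      qed
    qed
  qed
qed



definition seqs :: "(nat \<Rightarrow> bool) \<Rightarrow> nat \<Rightarrow> nat \<Rightarrow> (nat \<Rightarrow> nat) set" where
  "seqs t s c = {a. a 0 = 0 \<and> (\<forall>i>s. a i = 0) \<and> a s = c \<and>
     (\<forall>r<s. a r < a (Suc r) \<or> (a r = a (Suc r) \<and> even (a r) = t r))}"

lemma seqs_0: "seqs t 0 c = (if c = 0 then {\<lambda>_. 0} else {})"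
proof -
  have "a \<in> seqs t 0 c \<longleftrightarrow> a = (\<lambda>_. 0) \<and> c = 0" for a
  proof
    assume a: "a \<in> seqs t 0 c"
    have "a = (\<lambda>_. 0)"
    proof
      fix i show "a i = 0" using a by (cases i) (auto simp: seqs_def)
    qed
    then show "a = (\<lambda>_. 0) \<and> c = 0" using a by (auto simp: seqs_def)
  qed (auto simp: seqs_def)
  then show ?thesis by auto
qed

lemma seqs_card: "finite (seqs t s c) \<and> card (seqs t s c) = G t s c"
proof (induction s arbitrary: c)
  case 0
  then show ?case by (simp add: seqs_0)
next
  case (Suc s)
  define D where "D = {d. d < c \<or> (d = c \<and> even d = t s)}"
  have finD: "finite D" unfolding D_def by (rule finite_subset[of _ "{..c}"]) auto
  define f where "f = (\<lambda>(d::nat, a::nat \<Rightarrow> nat). a(Suc s := c))"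
  define A where "A = (SIGMA d:D. seqs t s d)"
  have inj: "inj_on f A"
  proof (rule inj_onI)
    fix x y assume x: "x \<in> A" and y: "y \<in> A" and e: "f x = f y"
    obtain d1 a1 where x1: "x = (d1, a1)" by fastforce
    obtain d2 a2 where y2: "y = (d2, a2)" by fastforce
    have m1: "a1 \<in> seqs t s d1" "a2 \<in> seqs t s d2" using x y x1 y2 by (auto simp: A_def)
    have "a1 = a2"
    proof
      fix i
      show "a1 i = a2 i"
      proof (cases "i = Suc s")
        case True then show ?thesis using m1 by (simp add: seqs_def)
      next
        case False then show ?thesis using e x1 y2 fun_upd_other[of i "Suc s" a1 c]
          fun_upd_other[of i "Suc s" a2 c] by (simp add: f_def)
      qed
    qed
    moreover have "d1 = a1 s" "d2 = a2 s" using m1 by (auto simp: seqs_def)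
    ultimately show "x = y" using x1 y2 by simp
  qed
  have img: "f ` A = seqs t (Suc s) c"
  proof
    show "f ` A \<subseteq> seqs t (Suc s) c"
    proof
      fix b assume "b \<in> f ` A"
      then obtain d a where da: "d \<in> D" "a \<in> seqs t s d" and b: "b = a(Suc s := c)"
        by (auto simp: A_def f_def)
      have as: "a s = d" "a 0 = 0" "\<forall>i>s. a i = 0"
        "\<forall>r<s. a r < a (Suc r) \<or> (a r = a (Suc r) \<and> even (a r) = t r)"
        using da(2) by (auto simp: seqs_def)
      show "b \<in> seqs t (Suc s) c"
        unfolding seqs_def b
      proof (intro CollectI conjI allI impI)
        fix r assume r: "r < Suc s"
        show "(a(Suc s := c)) r < (a(Suc s := c)) (Suc r) \<or>
              ((a(Suc s := c)) r = (a(Suc s := c)) (Suc r) \<and> even ((a(Suc s := c)) r) = t r)"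
        proof (cases "r = s")
          case True then show ?thesis using as(1) da(1) by (auto simp: D_def)
        next
          case False then show ?thesis using r as(4) by auto
        qed
      qed (use as in auto)
    qed
  next
    show "seqs t (Suc s) c \<subseteq> f ` A"
    proof
      fix b assume b: "b \<in> seqs t (Suc s) c"
      define a where "a = b(Suc s := 0)"
      have bs: "b 0 = 0" "\<forall>i>Suc s. b i = 0" "b (Suc s) = c"
        "\<forall>r<Suc s. b r < b (Suc r) \<or> (b r = b (Suc r) \<and> even (b r) = t r)"
        using b by (auto simp: seqs_def)
      have "a \<in> seqs t s (b s)" unfolding seqs_def a_def
        using bs by auto
      moreover have "b s \<in> D" using bs(3,4) by (auto simp: D_def)
      moreover have "b = f (b s, a)" unfolding f_def a_def using bs(3) by auto
      ultimately show "b \<in> f ` A" unfolding A_def by blast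
    qed
  qed
  have finA: "finite A" unfolding A_def using finD Suc.IH by auto
  have "card (seqs t (Suc s) c) = card A" using img inj card_image by fastforce
  also have "\<dots> = (\<Sum>d\<in>D. card (seqs t s d))" unfolding A_def
    using finD Suc.IH by (simp add: card_SigmaI)
  also have "\<dots> = (\<Sum>d\<in>D. G t s d)" using Suc.IH by simp
  also have "\<dots> = G t (Suc s) c"
  proof (cases "even c = t s")
    case True
    then have "D = insert c {..<c}" by (auto simp: D_def)
    then show ?thesis using True by simp
  next
    case False
    then have "D = {..<c}" by (auto simp: D_def)
    then show ?thesis using False by simp
  qed
  moreover have "finite (seqs t (Suc s) c)" using img finA by (metis finite_imageI)
  ultimately show ?case by simp
qed

lemma mono_upto:
  fixes a :: "nat \<Rightarrow> nat"
  shows "(\<forall>r<n. a r \<le> a (Suc r)) \<Longrightarrow> i \<le> n \<Longrightarrow> a i \<le> a n"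
proof (induction n)
  case 0 then show ?case by simp
next
  case (Suc n)
  then show ?case by (cases "i = Suc n") (auto intro: le_trans[of _ "a n"])
qed

lemma OmegaB_H:
  assumes inj: "\<forall>r<n. w (int r) \<noteq> w (int (Suc r))"
  shows "OmegaB n w k = H (\<lambda>r. w (int r) < w (int (Suc r))) n (2*k)"
proof -
  define t where "t = (\<lambda>r. w (int r) < w (int (Suc r)))"
  have eq: "OmegaB_seqs n w k = (\<Union>c\<in>{..2*k}. seqs t n c)"
  proof (intro set_eqI iffI)
    fix a assume a: "a \<in> OmegaB_seqs n w k"
    have c: "\<forall>r<n. a r < a (Suc r) \<or> (a r = a (Suc r) \<and> even (a r) = t r)"
    proof (intro allI impI)
      fix r assume r: "r < n"
      have ne: "w (int r) \<noteq> w (int (Suc r))" using inj r by blast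
      show "a r < a (Suc r) \<or> (a r = a (Suc r) \<and> even (a r) = t r)"
        using a r ne unfolding OmegaB_seqs_def t_def plus_type_def minus_type_def
        by (cases "w (int r) < w (int (Suc r))") auto
    qed
    have "a n \<le> 2*k"
    proof (cases "n = 0")
      case True then show ?thesis using a by (simp add: OmegaB_seqs_def)
    next
      case False then show ?thesis using a by (auto simp: OmegaB_seqs_def Zk_def)
    qed
    then show "a \<in> (\<Union>c\<in>{..2*k}. seqs t n c)"
      using a c by (auto simp: OmegaB_seqs_def seqs_def)
  next
    fix a assume "a \<in> (\<Union>c\<in>{..2*k}. seqs t n c)"
    then have a: "a 0 = 0" "\<forall>i>n. a i = 0" "a n \<le> 2*k"
      "\<forall>r<n. a r < a (Suc r) \<or> (a r = a (Suc r) \<and> even (a r) = t r)"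
      by (auto simp: seqs_def)
    have m: "\<forall>r<n. a r \<le> a (Suc r)" using a(4) by force
    have "\<forall>i\<in>{1..n}. a i \<in> Zk k" using mono_upto[OF m] a(3) by (force simp: Zk_def)
    then show "a \<in> OmegaB_seqs n w k" using a m
      unfolding OmegaB_seqs_def t_def plus_type_def minus_type_def by auto
  qed
  have fin: "\<forall>c\<in>{..2*k}. finite (seqs t n c)" using seqs_card by blast
  have disj: "\<forall>c1\<in>{..2*k}. \<forall>c2\<in>{..2*k}. c1 \<noteq> c2 \<longrightarrow> seqs t n c1 \<inter> seqs t n c2 = {}"
    by (auto simp: seqs_def)
  have "OmegaB n w k = (\<Sum>c\<le>2*k. card (seqs t n c))"
    unfolding OmegaB_def eq by (rule card_UN_disjoint) (use fin disj in auto)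
  also have "\<dots> = H t n (2*k)" unfolding H_def using seqs_card by simp
  finally show ?thesis unfolding t_def .
qed



theorem proposition4p13:
  fixes n :: nat and w :: "int \<Rightarrow> int"
  assumes "signed_perm n w"
  shows "(w 1 > 0 \<longrightarrow> (\<forall>x::rat. poly (OmegaB_poly n w) (- x - 1/2)
                             = (-1)^n * poly (OmegaB_poly n w) (x - 1/2))) \<and>
         (w 1 < 0 \<longrightarrow> (\<forall>x::rat. poly (OmegaB_poly n w) (- x)
                             = (-1)^n * poly (OmegaB_poly n w) x))"
proof -
  have bij: "bij_betw w {-int n..int n} {-int n..int n}"
    and odd: "\<forall>i\<in>{-int n..int n}. w (-i) = - w i"
    using assms by (auto simp: signed_perm_def)
  have w0: "w 0 = 0" using odd by force
  have injw: "inj_on w {-int n..int n}" using bij by (rule bij_betw_imp_inj_on)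
  have inj: "\<forall>r<n. w (int r) \<noteq> w (int (Suc r))"
  proof (intro allI impI)
    fix r assume "r < n"
    then have "int r \<in> {-int n..int n}" "int (Suc r) \<in> {-int n..int n}" by auto
    then show "w (int r) \<noteq> w (int (Suc r))" using injw by (metis inj_onD n_not_Suc_n of_nat_eq_iff)
  qed
  define t where "t = (\<lambda>r. w (int r) < w (int (Suc r)))"
  define E where "E = fst (PP t n)"
  have vals: "poly E (of_nat k) = of_nat (OmegaB n w k)" for k
    using PP_vals[of t n k] OmegaB_H[OF inj, of k] by (simp add: E_def t_def)
  have OP: "OmegaB_poly n w = E"
    unfolding OmegaB_poly_def
  proof (rule the_equality)
    show "\<forall>k. poly E (of_nat k) = of_nat (OmegaB n w k)" using vals by blast
  next
    fix p :: "rat poly" assume p: "\<forall>k::nat. poly p (of_nat k) = of_nat (OmegaB n w k)"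
    have "p - E = 0" by (rule poly_zero_on_nats) (use p vals in simp)
    then show "p = E" by simp
  qed
  have t0: "t 0 = (0 < w 1)" by (simp add: t_def w0)
  show ?thesis
  proof (cases "n = 0")
    case True
    then show ?thesis unfolding OP E_def by simp
  next
    case False
    then have n1: "n \<ge> 1" by simp
    have S: "(t 0 \<longrightarrow> symA (PP t n) ((-1)^n)) \<and> (\<not> t 0 \<longrightarrow> symD (PP t n) ((-1)^n))"
      by (rule PP_sym[OF n1])
    show ?thesis
    proof (intro conjI impI allI)
      fix x :: rat assume "w 1 > 0"
      then have "symA (PP t n) ((-1)^n)" using S t0 by simp
      then have "poly E (-1 - (x - 1/2)) = (-1)^n * poly E (x - 1/2)"
        unfolding symA_def E_def by blast
      moreover have "(-1 - (x - 1/2)) = - x - 1/2" by simp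
      ultimately show "poly (OmegaB_poly n w) (- x - 1/2) = (-1)^n * poly (OmegaB_poly n w) (x - 1/2)"
        unfolding OP by simp
    next
      fix x :: rat assume "w 1 < 0"
      then have "symD (PP t n) ((-1)^n)" using S t0 by simp
      then show "poly (OmegaB_poly n w) (- x) = (-1)^n * poly (OmegaB_poly n w) x"
        unfolding symD_def OP E_def by blast
    qed
  qed
qed

end
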